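(* Let $n\ge3$ and let $\mathfrak q$ be a finite complex Borel measure on $[0,1]$ without atoms at $0$ and $1$ whose distribution function $\mathcal Q(x)=\mathfrak q([0,x])$ is differentiable at $0$ and $1$ with $\mathcal Q'(0)=\mathcal Q'(1)=0$ (the total mass need not vanish). Let $\Xi$ be a bounded function on $\mathbb C$, and let $\Psi\in C^1(\overline{\Gamma^1\cup\Gamma^2}\times[0,1])$ satisfy $\operatorname{Re}\Psi(w,x)\le-c_0\min(x,1-x)$ for some $c_0>0$. Then, for positive functions $R=R(w)$ on $\overline{\Gamma^1\cup\Gamma^2}$ tending to infinity uniformly in $w$, $$\int_{\Gamma^1\cup\Gamma^2}\int_{[0,1]}R\,e^{R\Psi(w,x)}\,\Xi(Rw)\,\mathfrak q(dx)\,dw=o(1).$$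
   Context: $\Gamma^1=\{e^{i\phi}:0<\phi<\pi/n\}$ and $\Gamma^2=\{e^{i\phi}:\pi/n<\phi<2\pi/n\}$ are arcs of the unit circle; the integral in $w$ is the complex line integral along these arcs. *)

theory Defs
  imports "HOL-Complex_Analysis.Complex_Analysis"
begin

text \<open>A finite complex Borel measure q on [0,1] is represented by its polar
decomposition q = h |q|: a finite positive Borel measure M on the reals
concentrated on [0,1] (the total variation) and a Borel density h with norm
at most 1.\<close>

definition cm_integral :: "real measure \<Rightarrow> (real \<Rightarrow> complex) \<Rightarrow> (real \<Rightarrow> complex) \<Rightarrow> complex" where
  "cm_integral M h f = (LINT x|M. f x * h x)"

definition cm_dist :: "real measure \<Rightarrow> (real \<Rightarrow> complex) \<Rightarrow> real \<Rightarrow> complex" where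
  "cm_dist M h y = (LINT x|M. (if x \<in> {0..y} then h x else 0))"

definition cm_point :: "real measure \<Rightarrow> (real \<Rightarrow> complex) \<Rightarrow> real \<Rightarrow> complex" where
  "cm_point M h a = (LINT x|M. (if x = a then h x else 0))"

text \<open>Closed arc: closure of Gamma^1 union Gamma^2.\<close>
definition closed_arc :: "nat \<Rightarrow> complex set" where
  "closed_arc n = {cis \<phi> | \<phi>. 0 \<le> \<phi> \<and> \<phi> \<le> 2 * pi / real n}"

definition C1_on_set :: "('a::real_normed_vector \<Rightarrow> 'b::real_normed_vector) \<Rightarrow> 'a set \<Rightarrow> bool" where
  "C1_on_set f K \<longleftrightarrow> (\<exists>U g D. open U \<and> K \<subseteq> U \<and> (\<forall>z\<in>K. g z = f z) \<and>
      (\<forall>z\<in>U. (g has_derivative blinfun_apply (D z)) (at z)) \<and> continuous_on U D)"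

end

theory Submission
  imports Defs
begin


lemma fub:
  fixes M :: "real measure" and h \<psi> :: "real \<Rightarrow> complex" and S :: "(real \<times> real) set"
  assumes Ms[measurable_cong]: "sets M = sets borel" and fin: "finite_measure M"
    and hm[measurable]: "h \<in> borel_measurable borel" and hb: "\<forall>x. norm (h x) \<le> 1"
    and pm[measurable]: "\<psi> \<in> borel_measurable borel" and pb: "\<forall>s. norm (\<psi> s) \<le> K"
    and S[measurable]: "S \<in> sets borel" and Sab: "\<And>x s. (x, s) \<in> S \<Longrightarrow> a \<le> s \<and> s \<le> b"
  shows "(LINT x|M. LINT s|lborel. indicator S (x,s) *\<^sub>R (h x * \<psi> s))
       = (LINT s|lborel. LINT x|M. indicator S (x,s) *\<^sub>R (h x * \<psi> s))"
proof -
  interpret finite_measure M by (rule fin)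
  interpret P: pair_sigma_finite M lborel
    by (simp add: pair_sigma_finite.intro sigma_finite_measure_axioms lborel.sigma_finite_measure_axioms)
  have "integrable (M \<Otimes>\<^sub>M lborel) (\<lambda>(x,s). indicator S (x,s) *\<^sub>R (h x * \<psi> s))"
  proof (rule integrableI_bounded_set [where B="K" and A="space M \<times> {a..b}"])
    show "emeasure (M \<Otimes>\<^sub>M lborel) (space M \<times> {a..b}) < \<infinity>"
    proof -
      have f: "emeasure M (space M) < \<infinity>" using emeasure_finite[of "space M"] by (simp add: less_top[symmetric])
      show ?thesis
        by (subst sigma_finite_measure.emeasure_pair_measure_Times[OF lborel.sigma_finite_measure_axioms])
          (use f in \<open>auto simp: ennreal_mult_less_top emeasure_lborel_Icc_eq\<close>)
    qed
    have "norm (indicator S (x,s) *\<^sub>R (h x * \<psi> s)) \<le> K" for x s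
    proof -
      have "norm (h x * \<psi> s) \<le> 1 * K" unfolding norm_mult
        using hb pb by (intro mult_mono) simp_all
      moreover have "0 \<le> K" using pb[rule_format, of 0] by (meson norm_ge_zero order_trans)
      ultimately show ?thesis by (simp add: indicator_def)
    qed
    then show "AE x\<in>space M \<times> {a..b} in M \<Otimes>\<^sub>M lborel. cmod (case x of (x, s) \<Rightarrow> indicator S (x,s) *\<^sub>R (h x * \<psi> s)) \<le> K"
      by auto
    show "AE x in M \<Otimes>\<^sub>M lborel. x \<notin> space M \<times> {a..b} \<longrightarrow> (case x of (x, s) \<Rightarrow> indicator S (x,s) *\<^sub>R (h x * \<psi> s)) = 0"
      using Sab sets_eq_imp_space_eq[OF Ms] by (intro AE_I2) (auto simp: indicator_def)
    show "space M \<times> {a..b} \<in> sets (M \<Otimes>\<^sub>M lborel)" by measurable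
    show "(\<lambda>(x, s). indicator S (x,s) *\<^sub>R (h x * \<psi> s)) \<in> borel_measurable (M \<Otimes>\<^sub>M lborel)"
      by measurable
  qed
  then show ?thesis
    using P.Fubini_integral[of "\<lambda>x s. indicator S (x,s) *\<^sub>R (h x * \<psi> s)"] by simp
qed

lemma norm_int_le_int:
  fixes f :: "'a \<Rightarrow> 'b::{banach,second_countable_topology}"
  assumes g: "integrable M g" and b: "\<And>x. x \<in> space M \<Longrightarrow> norm (f x) \<le> g x"
  shows "norm (integral\<^sup>L M f) \<le> integral\<^sup>L M g"
proof (cases "integrable M f")
  case True
  have "norm (integral\<^sup>L M f) \<le> (\<integral>x. norm (f x) \<partial>M)" by (rule integral_norm_bound)
  also have "\<dots> \<le> integral\<^sup>L M g"
    by (rule integral_mono[OF integrable_norm[OF True] g b])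
  finally show ?thesis .
next
  case False
  have "0 \<le> integral\<^sup>L M g"
    by (rule integral_nonneg_AE) (use b in \<open>auto intro: order_trans[OF norm_ge_zero]\<close>)
  then show ?thesis using False by (simp add: not_integrable_integral_eq)
qed

lemma norm_int_le_const:
  fixes f :: "'a \<Rightarrow> 'b::{banach,second_countable_topology}"
  assumes fin: "finite_measure M" and b: "\<And>x. x \<in> space M \<Longrightarrow> norm (f x) \<le> B" and B: "0 \<le> B"
  shows "norm (integral\<^sup>L M f) \<le> measure M (space M) * B"
proof -
  interpret finite_measure M by (rule fin)
  have "norm (integral\<^sup>L M f) \<le> integral\<^sup>L M (\<lambda>x. B)"
    by (rule norm_int_le_int) (use b in auto)
  then show ?thesis by (simp add: mult.commute)
qed

lemma int_bdd:
  fixes f :: "'a \<Rightarrow> 'b::{banach,second_countable_topology}"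
  assumes fin: "finite_measure M" and m: "f \<in> borel_measurable M" and b: "\<And>x. x \<in> space M \<Longrightarrow> norm (f x) \<le> B"
  shows "integrable M f"
proof -
  interpret finite_measure M by (rule fin)
  show ?thesis by (rule integrable_const_bound[where B=B]) (use b m in auto)
qed

lemma ftc_lborel:
  fixes \<phi> \<phi>' :: "real \<Rightarrow> 'b::euclidean_space"
  assumes uv: "u \<le> v"
    and d: "\<And>s. s \<in> {u..v} \<Longrightarrow> (\<phi> has_vector_derivative \<phi>' s) (at s within {u..v})"
    and c: "continuous_on {u..v} \<phi>'"
  shows "(LINT s|lborel. indicator {u..v} s *\<^sub>R \<phi>' s) = \<phi> v - \<phi> u"
proof -
  have si: "set_integrable lborel {u..v} \<phi>'" by (rule borel_integrable_atLeastAtMost'[OF c])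
  have "(LINT s|lborel. indicator {u..v} s *\<^sub>R \<phi>' s) = (LINT s:{u..v}|lborel. \<phi>' s)"
    by (simp add: set_lebesgue_integral_def)
  also have "\<dots> = integral {u..v} \<phi>'" by (rule set_borel_integral_eq_integral(2)[OF si])
  also have "\<dots> = \<phi> v - \<phi> u"
    by (rule integral_unique[OF fundamental_theorem_of_calculus[OF uv d]])
  finally show ?thesis .
qed

lemma phi_bdd:
  fixes \<phi> :: "real \<Rightarrow> 'b::real_normed_vector"
  assumes "continuous_on {a..b} \<phi>"
  shows "\<exists>P\<ge>0. \<forall>x\<in>{a..b}. norm (\<phi> x) \<le> P"
proof -
  have "bounded (\<phi> ` {a..b})" by (rule compact_imp_bounded[OF compact_continuous_image[OF assms]]) simp
  then obtain P where "\<forall>y\<in>\<phi> ` {a..b}. norm y \<le> P" by (auto simp: bounded_iff)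
  then show ?thesis by (intro exI[of _ "max P 0"]) force
qed

lemma left_piece:
  fixes M :: "real measure" and h \<phi> \<phi>' :: "real \<Rightarrow> complex"
  assumes Ms[measurable_cong]: "sets M = sets borel" and fin: "finite_measure M"
    and hm[measurable]: "h \<in> borel_measurable borel" and hb: "\<forall>x. norm (h x) \<le> 1"
    and d: "\<And>x. x \<in> {0..1} \<Longrightarrow> (\<phi> has_vector_derivative \<phi>' x) (at x within {0..1})"
    and c: "continuous_on {0..1} \<phi>'"
    and \<delta>: "0 \<le> \<delta>" "\<delta> \<le> 1"
  shows "(LINT x|M. indicator {0..\<delta>} x *\<^sub>R (h x * \<phi> x))
       = \<phi> \<delta> * cm_dist M h \<delta> - (LINT s|lborel. indicator {0..\<delta>} s *\<^sub>R (\<phi>' s * cm_dist M h s))"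
proof -
  define \<psi> where "\<psi> s = indicator {0..1} s *\<^sub>R \<phi>' s" for s
  have \<psi>m[measurable]: "\<psi> \<in> borel_measurable borel"
    unfolding \<psi>_def by (rule borel_measurable_continuous_on_indicator[OF _ c]) simp
  obtain K where K: "K \<ge> 0" "\<forall>x\<in>{0..1}. norm (\<phi>' x) \<le> K" using phi_bdd[OF c] by blast
  have \<psi>b: "\<forall>s. norm (\<psi> s) \<le> K" using K by (simp add: \<psi>_def indicator_def)
  have cphi: "continuous_on {0..1} \<phi>" by (rule continuous_on_vector_derivative) (use d in auto)
  obtain P where P: "P \<ge> 0" "\<forall>x\<in>{0..1}. norm (\<phi> x) \<le> P" using phi_bdd[OF cphi] by blast
  have phim[measurable]: "(\<lambda>x. indicator {0..1} x *\<^sub>R \<phi> x) \<in> borel_measurable borel"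
    by (rule borel_measurable_continuous_on_indicator[OF _ cphi]) simp
  define S0 where "S0 = {p::real\<times>real. 0 \<le> fst p \<and> fst p \<le> snd p \<and> snd p \<le> \<delta>}"
  have "closed S0" unfolding S0_def
    by (intro closed_Collect_conj closed_Collect_le continuous_intros)
  then have S0[measurable]: "S0 \<in> sets borel" by (rule borel_closed)
  have fubi: "(LINT x|M. LINT s|lborel. indicator S0 (x,s) *\<^sub>R (h x * \<psi> s))
       = (LINT s|lborel. LINT x|M. indicator S0 (x,s) *\<^sub>R (h x * \<psi> s))"
    by (rule fub[OF Ms fin hm hb \<psi>m \<psi>b S0, of 0 \<delta>]) (auto simp: S0_def)
  have A: "(LINT s|lborel. indicator S0 (x,s) *\<^sub>R (h x * \<psi> s)) = indicator {0..\<delta>} x *\<^sub>R (h x * (\<phi> \<delta> - \<phi> x))" for x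
  proof (cases "x \<in> {0..\<delta>}")
    case True
    have "(LINT s|lborel. indicator S0 (x,s) *\<^sub>R (h x * \<psi> s)) = (LINT s|lborel. h x * (indicator {x..\<delta>} s *\<^sub>R \<phi>' s))"
      by (intro Bochner_Integration.integral_cong refl) (use True \<delta> in \<open>auto simp: S0_def \<psi>_def indicator_def\<close>)
    also have "\<dots> = h x * (LINT s|lborel. indicator {x..\<delta>} s *\<^sub>R \<phi>' s)" by (rule integral_mult_right_zero)
    also have "(LINT s|lborel. indicator {x..\<delta>} s *\<^sub>R \<phi>' s) = \<phi> \<delta> - \<phi> x"
    proof (rule ftc_lborel)
      show "x \<le> \<delta>" using True by simp
      show "(\<phi> has_vector_derivative \<phi>' s) (at s within {x..\<delta>})" if "s \<in> {x..\<delta>}" for s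
        using that True \<delta> by (intro has_vector_derivative_within_subset[OF d]) auto
      show "continuous_on {x..\<delta>} \<phi>'" using True \<delta> by (rule_tac continuous_on_subset[OF c]) auto
    qed
    finally show ?thesis using True by simp
  next
    case False
    then have "(\<lambda>s. indicator S0 (x,s) *\<^sub>R (h x * \<psi> s)) = (\<lambda>_. 0)"
      by (auto simp: S0_def indicator_def fun_eq_iff)
    then show ?thesis using False by simp
  qed
  have B: "(LINT x|M. indicator S0 (x,s) *\<^sub>R (h x * \<psi> s)) = indicator {0..\<delta>} s *\<^sub>R (\<phi>' s * cm_dist M h s)" for s
  proof (cases "s \<in> {0..\<delta>}")
    case True
    have "(LINT x|M. indicator S0 (x,s) *\<^sub>R (h x * \<psi> s)) = (LINT x|M. \<phi>' s * (if x \<in> {0..s} then h x else 0))"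
      by (intro Bochner_Integration.integral_cong refl) (use True \<delta> in \<open>auto simp: S0_def \<psi>_def indicator_def\<close>)
    then show ?thesis using True by (simp add: cm_dist_def)
  next
    case False
    then have "(\<lambda>x. indicator S0 (x,s) *\<^sub>R (h x * \<psi> s)) = (\<lambda>_. 0)"
      by (auto simp: S0_def indicator_def fun_eq_iff)
    then show ?thesis using False by simp
  qed
  have i1: "integrable M (\<lambda>x. indicator {0..\<delta>} x *\<^sub>R (h x * \<phi> \<delta>))"
    by (rule int_bdd[OF fin, where B="norm (\<phi> \<delta>)"]) (use hb in \<open>auto simp: indicator_def norm_mult intro: mult_left_le_one_le\<close>)
  have i2: "integrable M (\<lambda>x. indicator {0..\<delta>} x *\<^sub>R (h x * (\<phi> \<delta> - \<phi> x)))"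
  proof (rule int_bdd[OF fin, where B="2 * P"])
    show "(\<lambda>x. indicator {0..\<delta>} x *\<^sub>R (h x * (\<phi> \<delta> - \<phi> x))) \<in> borel_measurable M"
    proof -
      have "(\<lambda>x. indicator {0..\<delta>} x *\<^sub>R (h x * (\<phi> \<delta> - indicator {0..1} x *\<^sub>R \<phi> x))) \<in> borel_measurable M"
        by measurable
      moreover have "(\<lambda>x. indicator {0..\<delta>} x *\<^sub>R (h x * (\<phi> \<delta> - indicator {0..1} x *\<^sub>R \<phi> x))) = (\<lambda>x. indicator {0..\<delta>} x *\<^sub>R (h x * (\<phi> \<delta> - \<phi> x)))"
        using \<delta> by (auto simp: indicator_def fun_eq_iff)
      ultimately show ?thesis by simp
    qed
    show "norm (indicator {0..\<delta>} x *\<^sub>R (h x * (\<phi> \<delta> - \<phi> x))) \<le> 2 * P" for x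
    proof (cases "x \<in> {0..\<delta>}")
      case True
      have "norm (\<phi> \<delta> - \<phi> x) \<le> norm (\<phi> \<delta>) + norm (\<phi> x)" by (rule norm_triangle_ineq4)
      also have "\<dots> \<le> 2 * P" using P True \<delta> by (smt (verit) atLeastAtMost_iff)
      finally have "norm (h x) * norm (\<phi> \<delta> - \<phi> x) \<le> 1 * (2 * P)"
        using hb by (intro mult_mono) auto
      then show ?thesis using True by (simp add: norm_mult)
    qed (use P in simp)
  qed
  have "(LINT x|M. indicator {0..\<delta>} x *\<^sub>R (h x * \<phi> x))
      = (LINT x|M. indicator {0..\<delta>} x *\<^sub>R (h x * \<phi> \<delta>) - indicator {0..\<delta>} x *\<^sub>R (h x * (\<phi> \<delta> - \<phi> x)))"
    by (intro Bochner_Integration.integral_cong) (auto simp: algebra_simps)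
  also have "\<dots> = (LINT x|M. indicator {0..\<delta>} x *\<^sub>R (h x * \<phi> \<delta>)) - (LINT x|M. indicator {0..\<delta>} x *\<^sub>R (h x * (\<phi> \<delta> - \<phi> x)))"
    by (rule Bochner_Integration.integral_diff[OF i1 i2])
  also have "(LINT x|M. indicator {0..\<delta>} x *\<^sub>R (h x * \<phi> \<delta>)) = (LINT x|M. \<phi> \<delta> * (if x \<in> {0..\<delta>} then h x else 0))"
    by (intro Bochner_Integration.integral_cong) (auto simp: indicator_def)
  also have "\<dots> = \<phi> \<delta> * cm_dist M h \<delta>" by (simp add: cm_dist_def)
  also have "(LINT x|M. indicator {0..\<delta>} x *\<^sub>R (h x * (\<phi> \<delta> - \<phi> x))) = (LINT x|M. LINT s|lborel. indicator S0 (x,s) *\<^sub>R (h x * \<psi> s))"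
    by (simp add: A)
  also have "\<dots> = (LINT s|lborel. indicator {0..\<delta>} s *\<^sub>R (\<phi>' s * cm_dist M h s))"
    by (simp add: fubi B)
  finally show ?thesis .
qed

lemma Q_diff:
  fixes M :: "real measure" and h :: "real \<Rightarrow> complex"
  assumes Ms[measurable_cong]: "sets M = sets borel" and fin: "finite_measure M"
    and hm[measurable]: "h \<in> borel_measurable borel" and hb: "\<forall>x. norm (h x) \<le> 1"
    and s: "0 \<le> s" "s \<le> 1"
  shows "(LINT x|M. (if x \<in> {s<..1} then h x else 0)) = cm_dist M h 1 - cm_dist M h s"
proof -
  have i: "integrable M (\<lambda>x. if x \<in> {0..t} then h x else 0)" for t
    by (rule int_bdd[OF fin, where B=1]) (use hb in auto)
  have "(LINT x|M. (if x \<in> {s<..1} then h x else 0)) = (LINT x|M. (if x \<in> {0..1} then h x else 0) - (if x \<in> {0..s} then h x else 0))"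
    by (intro Bochner_Integration.integral_cong refl) (use s in auto)
  also have "\<dots> = cm_dist M h 1 - cm_dist M h s"
    unfolding cm_dist_def by (rule Bochner_Integration.integral_diff[OF i i])
  finally show ?thesis .
qed

lemma right_piece:
  fixes M :: "real measure" and h \<phi> \<phi>' :: "real \<Rightarrow> complex"
  assumes Ms[measurable_cong]: "sets M = sets borel" and fin: "finite_measure M"
    and hm[measurable]: "h \<in> borel_measurable borel" and hb: "\<forall>x. norm (h x) \<le> 1"
    and d: "\<And>x. x \<in> {0..1} \<Longrightarrow> (\<phi> has_vector_derivative \<phi>' x) (at x within {0..1})"
    and c: "continuous_on {0..1} \<phi>'"
    and \<delta>: "0 \<le> \<delta>" "\<delta> \<le> 1"
  shows "(LINT x|M. indicator {1-\<delta><..1} x *\<^sub>R (h x * \<phi> x))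
       = \<phi> (1-\<delta>) * (cm_dist M h 1 - cm_dist M h (1-\<delta>))
         + (LINT s|lborel. indicator {1-\<delta>..1} s *\<^sub>R (\<phi>' s * (cm_dist M h 1 - cm_dist M h s)))"
proof -
  define \<psi> where "\<psi> s = indicator {0..1} s *\<^sub>R \<phi>' s" for s
  have \<psi>m[measurable]: "\<psi> \<in> borel_measurable borel"
    unfolding \<psi>_def by (rule borel_measurable_continuous_on_indicator[OF _ c]) simp
  obtain K where K: "K \<ge> 0" "\<forall>x\<in>{0..1}. norm (\<phi>' x) \<le> K" using phi_bdd[OF c] by blast
  have \<psi>b: "\<forall>s. norm (\<psi> s) \<le> K" using K by (simp add: \<psi>_def indicator_def)
  have cphi: "continuous_on {0..1} \<phi>" by (rule continuous_on_vector_derivative) (use d in auto)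
  obtain P where P: "P \<ge> 0" "\<forall>x\<in>{0..1}. norm (\<phi> x) \<le> P" using phi_bdd[OF cphi] by blast
  have phim[measurable]: "(\<lambda>x. indicator {0..1} x *\<^sub>R \<phi> x) \<in> borel_measurable borel"
    by (rule borel_measurable_continuous_on_indicator[OF _ cphi]) simp
  define S1 where "S1 = {p::real\<times>real. 1-\<delta> \<le> snd p \<and> fst p \<le> 1} \<inter> {p. snd p < fst p}"
  have "closed {p::real\<times>real. 1-\<delta> \<le> snd p \<and> fst p \<le> 1}"
    by (intro closed_Collect_conj closed_Collect_le continuous_intros)
  moreover have "open {p::real\<times>real. snd p < fst p}"
    by (intro open_Collect_less continuous_intros)
  ultimately have S1[measurable]: "S1 \<in> sets borel" unfolding S1_def
    by (intro sets.Int borel_closed borel_open)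
  have fubi: "(LINT x|M. LINT s|lborel. indicator S1 (x,s) *\<^sub>R (h x * \<psi> s))
       = (LINT s|lborel. LINT x|M. indicator S1 (x,s) *\<^sub>R (h x * \<psi> s))"
    by (rule fub[OF Ms fin hm hb \<psi>m \<psi>b S1, of "1-\<delta>" 1]) (auto simp: S1_def)
  have A: "(LINT s|lborel. indicator S1 (x,s) *\<^sub>R (h x * \<psi> s)) = indicator {1-\<delta><..1} x *\<^sub>R (h x * (\<phi> x - \<phi> (1-\<delta>)))" for x
  proof (cases "x \<in> {1-\<delta><..1}")
    case True
    have "(LINT s|lborel. indicator S1 (x,s) *\<^sub>R (h x * \<psi> s)) = (LINT s|lborel. h x * (indicator {1-\<delta>..<x} s *\<^sub>R \<psi> s))"
      by (intro Bochner_Integration.integral_cong refl) (use True \<delta> in \<open>auto simp: S1_def indicator_def\<close>)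
    also have "\<dots> = h x * (LINT s|lborel. indicator {1-\<delta>..<x} s *\<^sub>R \<psi> s)" by (rule integral_mult_right_zero)
    also have "(LINT s|lborel. indicator {1-\<delta>..<x} s *\<^sub>R \<psi> s) = (LINT s|lborel. indicator {1-\<delta>..x} s *\<^sub>R \<phi>' s)"
    proof -
      have "(LINT s|lborel. indicator {1-\<delta>..<x} s *\<^sub>R \<psi> s) = (LINT s|lborel. indicator {1-\<delta>..x} s *\<^sub>R \<psi> s)"
      proof (rule integral_cong_AE)
        show "AE s in lborel. indicator {1-\<delta>..<x} s *\<^sub>R \<psi> s = indicator {1-\<delta>..x} s *\<^sub>R \<psi> s"
          using AE_lborel_singleton[of x] by eventually_elim (auto simp: indicator_def)
      qed measurable
      also have "\<dots> = (LINT s|lborel. indicator {1-\<delta>..x} s *\<^sub>R \<phi>' s)"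
        by (intro Bochner_Integration.integral_cong refl) (use True \<delta> in \<open>auto simp: \<psi>_def indicator_def\<close>)
      finally show ?thesis .
    qed
    also have "(LINT s|lborel. indicator {1-\<delta>..x} s *\<^sub>R \<phi>' s) = \<phi> x - \<phi> (1-\<delta>)"
    proof (rule ftc_lborel)
      show "1-\<delta> \<le> x" using True by simp
      show "(\<phi> has_vector_derivative \<phi>' s) (at s within {1-\<delta>..x})" if "s \<in> {1-\<delta>..x}" for s
        using that True \<delta> by (intro has_vector_derivative_within_subset[OF d]) auto
      show "continuous_on {1-\<delta>..x} \<phi>'" using True \<delta> by (rule_tac continuous_on_subset[OF c]) auto
    qed
    finally show ?thesis using True by simp
  next
    case False
    then have "(\<lambda>s. indicator S1 (x,s) *\<^sub>R (h x * \<psi> s)) = (\<lambda>_. 0)"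
      by (auto simp: S1_def indicator_def fun_eq_iff)
    then show ?thesis using False by simp
  qed
  have B: "(LINT x|M. indicator S1 (x,s) *\<^sub>R (h x * \<psi> s)) = indicator {1-\<delta>..1} s *\<^sub>R (\<phi>' s * (cm_dist M h 1 - cm_dist M h s))" for s
  proof (cases "s \<in> {1-\<delta>..1}")
    case True
    have "(LINT x|M. indicator S1 (x,s) *\<^sub>R (h x * \<psi> s)) = (LINT x|M. \<phi>' s * (if x \<in> {s<..1} then h x else 0))"
      by (intro Bochner_Integration.integral_cong refl) (use True \<delta> in \<open>auto simp: S1_def \<psi>_def indicator_def\<close>)
    also have "\<dots> = \<phi>' s * (LINT x|M. (if x \<in> {s<..1} then h x else 0))" by (rule integral_mult_right_zero)
    also have "(LINT x|M. (if x \<in> {s<..1} then h x else 0)) = cm_dist M h 1 - cm_dist M h s"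
      by (rule Q_diff[OF Ms fin hm hb]) (use True \<delta> in auto)
    finally show ?thesis using True by simp
  next
    case False
    then have "(\<lambda>x. indicator S1 (x,s) *\<^sub>R (h x * \<psi> s)) = (\<lambda>_. 0)"
      by (auto simp: S1_def indicator_def fun_eq_iff)
    then show ?thesis using False by simp
  qed
  have i1: "integrable M (\<lambda>x. indicator {1-\<delta><..1} x *\<^sub>R (h x * \<phi> (1-\<delta>)))"
    by (rule int_bdd[OF fin, where B="norm (\<phi> (1-\<delta>))"]) (use hb in \<open>auto simp: indicator_def norm_mult intro: mult_left_le_one_le\<close>)
  have i2: "integrable M (\<lambda>x. indicator {1-\<delta><..1} x *\<^sub>R (h x * (\<phi> x - \<phi> (1-\<delta>))))"
  proof (rule int_bdd[OF fin, where B="2 * P"])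
    show "(\<lambda>x. indicator {1-\<delta><..1} x *\<^sub>R (h x * (\<phi> x - \<phi> (1-\<delta>)))) \<in> borel_measurable M"
    proof -
      have "(\<lambda>x. indicator {1-\<delta><..1} x *\<^sub>R (h x * (indicator {0..1} x *\<^sub>R \<phi> x - \<phi> (1-\<delta>)))) \<in> borel_measurable M"
        by measurable
      moreover have "(\<lambda>x. indicator {1-\<delta><..1} x *\<^sub>R (h x * (indicator {0..1} x *\<^sub>R \<phi> x - \<phi> (1-\<delta>)))) = (\<lambda>x. indicator {1-\<delta><..1} x *\<^sub>R (h x * (\<phi> x - \<phi> (1-\<delta>))))"
        using \<delta> by (auto simp: indicator_def fun_eq_iff)
      ultimately show ?thesis by simp
    qed
    show "norm (indicator {1-\<delta><..1} x *\<^sub>R (h x * (\<phi> x - \<phi> (1-\<delta>)))) \<le> 2 * P" for x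
    proof (cases "x \<in> {1-\<delta><..1}")
      case True
      have "norm (\<phi> x - \<phi> (1-\<delta>)) \<le> norm (\<phi> x) + norm (\<phi> (1-\<delta>))" by (rule norm_triangle_ineq4)
      also have "\<dots> \<le> 2 * P" using P True \<delta> by (smt (verit) atLeastAtMost_iff greaterThanAtMost_iff)
      finally have "norm (h x) * norm (\<phi> x - \<phi> (1-\<delta>)) \<le> 1 * (2 * P)"
        using hb by (intro mult_mono) auto
      then show ?thesis using True by (simp add: norm_mult)
    qed (use P in simp)
  qed
  have "(LINT x|M. indicator {1-\<delta><..1} x *\<^sub>R (h x * \<phi> x))
      = (LINT x|M. indicator {1-\<delta><..1} x *\<^sub>R (h x * \<phi> (1-\<delta>)) + indicator {1-\<delta><..1} x *\<^sub>R (h x * (\<phi> x - \<phi> (1-\<delta>))))"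
    by (intro Bochner_Integration.integral_cong refl) (auto simp: algebra_simps)
  also have "\<dots> = (LINT x|M. indicator {1-\<delta><..1} x *\<^sub>R (h x * \<phi> (1-\<delta>))) + (LINT x|M. indicator {1-\<delta><..1} x *\<^sub>R (h x * (\<phi> x - \<phi> (1-\<delta>))))"
    by (rule Bochner_Integration.integral_add[OF i1 i2])
  also have "(LINT x|M. indicator {1-\<delta><..1} x *\<^sub>R (h x * \<phi> (1-\<delta>))) = (LINT x|M. \<phi> (1-\<delta>) * (if x \<in> {1-\<delta><..1} then h x else 0))"
    by (intro Bochner_Integration.integral_cong refl) (auto simp: indicator_def)
  also have "\<dots> = \<phi> (1-\<delta>) * (LINT x|M. (if x \<in> {1-\<delta><..1} then h x else 0))" by (rule integral_mult_right_zero)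
  also have "(LINT x|M. (if x \<in> {1-\<delta><..1} then h x else 0)) = cm_dist M h 1 - cm_dist M h (1-\<delta>)"
    by (rule Q_diff[OF Ms fin hm hb]) (use \<delta> in auto)
  also have "(LINT x|M. indicator {1-\<delta><..1} x *\<^sub>R (h x * (\<phi> x - \<phi> (1-\<delta>)))) = (LINT x|M. LINT s|lborel. indicator S1 (x,s) *\<^sub>R (h x * \<psi> s))"
    by (simp add: A)
  also have "\<dots> = (LINT s|lborel. indicator {1-\<delta>..1} s *\<^sub>R (\<phi>' s * (cm_dist M h 1 - cm_dist M h s)))"
    by (simp add: fubi B)
  finally show ?thesis .
qed

lemma exp_int_left:
  fixes a \<delta> :: real
  assumes a: "a > 0" and \<delta>: "0 \<le> \<delta>"
  shows "(LINT s|lborel. indicator {0..\<delta>} s *\<^sub>R (s * exp (- a * s))) \<le> 1 / a^2"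
proof -
  define F where "F s = -(s/a + 1/a^2) * exp (- a * s)" for s
  have "(F has_real_derivative (s * exp (- a * s))) (at s)" for s
  proof -
    have "(F has_real_derivative (-(1/a) * exp (- a * s) + (-(s/a + 1/a^2)) * (exp (- a * s) * (-a)))) (at s)"
      unfolding F_def using a by (auto intro!: derivative_eq_intros)
    moreover have "-(1/a) * exp (- a * s) + (-(s/a + 1/a^2)) * (exp (- a * s) * (-a)) = s * exp (- a * s)"
      using a by (simp add: field_simps power2_eq_square)
    ultimately show ?thesis by simp
  qed
  then have "(LINT s|lborel. indicator {0..\<delta>} s *\<^sub>R (s * exp (- a * s))) = F \<delta> - F 0"
    by (intro ftc_lborel \<delta>)
      (auto simp: has_real_derivative_iff_has_vector_derivative[symmetric] intro!: continuous_intros intro: DERIV_subset)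
  also have "\<dots> \<le> 1 / a^2"
  proof -
    have "0 \<le> (\<delta>/a + 1/a^2) * exp (- a * \<delta>)" using a \<delta> by simp
    then show ?thesis by (simp add: F_def algebra_simps)
  qed
  finally show ?thesis .
qed

lemma exp_int_right:
  fixes a \<delta> :: real
  assumes a: "a > 0" and \<delta>: "0 \<le> \<delta>"
  shows "(LINT s|lborel. indicator {1-\<delta>..1} s *\<^sub>R ((1-s) * exp (- a * (1 - s)))) \<le> 1 / a^2"
proof -
  define F where "F s = ((1-s)/a + 1/a^2) * exp (- a * (1 - s))" for s
  have "(F has_real_derivative ((1-s) * exp (- a * (1 - s)))) (at s)" for s
  proof -
    have "(F has_real_derivative (-(1/a) * exp (- a * (1 - s)) + ((1-s)/a + 1/a^2) * (exp (- a * (1 - s)) * (-a*(-1))))) (at s)"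
      unfolding F_def using a by (auto intro!: derivative_eq_intros)
    moreover have "-(1/a) * exp (- a * (1 - s)) + ((1-s)/a + 1/a^2) * (exp (- a * (1 - s)) * (-a*(-1))) = (1-s) * exp (- a * (1 - s))"
      using a by (simp add: field_simps power2_eq_square)
    ultimately show ?thesis by simp
  qed
  then have "(LINT s|lborel. indicator {1-\<delta>..1} s *\<^sub>R ((1-s) * exp (- a * (1 - s)))) = F 1 - F (1-\<delta>)"
    by (intro ftc_lborel)
      (use \<delta> in \<open>auto simp: has_real_derivative_iff_has_vector_derivative[symmetric] intro!: continuous_intros intro: DERIV_subset\<close>)
  also have "\<dots> \<le> 1 / a^2"
    using a \<delta> by (simp add: F_def)
  finally show ?thesis .
qed


lemma key:
  fixes M :: "real measure" and h \<phi> \<phi>' :: "real \<Rightarrow> complex"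
  assumes Ms[measurable_cong]: "sets M = sets borel" and fin: "finite_measure M"
    and hm[measurable]: "h \<in> borel_measurable borel" and hb: "\<forall>x. norm (h x) \<le> 1"
    and d: "\<And>x. x \<in> {0..1} \<Longrightarrow> (\<phi> has_vector_derivative \<phi>' x) (at x within {0..1})"
    and c: "continuous_on {0..1} \<phi>'"
    and \<delta>: "0 < \<delta>" "\<delta> \<le> 1/2" and \<eta>: "\<eta> \<ge> 0" and a: "a > 0" and K: "K \<ge> 0" and P: "P \<ge> 0"
    and Q0: "\<forall>s\<in>{0..\<delta>}. norm (cm_dist M h s) \<le> \<eta> * s"
    and Q1: "\<forall>s\<in>{1-\<delta>..1}. norm (cm_dist M h 1 - cm_dist M h s) \<le> \<eta> * (1 - s)"
    and b1: "\<forall>x\<in>{0..\<delta>}. norm (\<phi>' x) \<le> K * exp (- a * x)"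
    and b1': "\<forall>x\<in>{1-\<delta>..1}. norm (\<phi>' x) \<le> K * exp (- a * (1 - x))"
    and b2: "\<forall>x\<in>{\<delta>..1-\<delta>}. norm (\<phi> x) \<le> P"
  shows "norm (LINT x|M. indicator {0..1} x *\<^sub>R (h x * \<phi> x)) \<le> 3 * (measure M (space M) * P) + 2 * (K * \<eta> / a^2)"
proof -
  interpret finite_measure M by (rule fin)
  define m where "m = measure M (space M)"
  have m0: "m \<ge> 0" by (simp add: m_def)
  have cphi: "continuous_on {0..1} \<phi>" by (rule continuous_on_vector_derivative) (use d in auto)
  obtain P' where P': "P' \<ge> 0" "\<forall>x\<in>{0..1}. norm (\<phi> x) \<le> P'" using phi_bdd[OF cphi] by blast
  have phim[measurable]: "(\<lambda>x. indicator {0..1} x *\<^sub>R \<phi> x) \<in> borel_measurable borel"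
    by (rule borel_measurable_continuous_on_indicator[OF _ cphi]) simp
  have intA: "integrable M (\<lambda>x. indicator A x *\<^sub>R (h x * \<phi> x))" if A: "A \<in> sets borel" "A \<subseteq> {0..1}" for A
  proof (rule int_bdd[OF fin, where B=P'])
    have [measurable]: "A \<in> sets borel" by (rule A)
    have "(\<lambda>x. indicator A x *\<^sub>R (h x * (indicator {0..1} x *\<^sub>R \<phi> x))) \<in> borel_measurable M" by measurable
    moreover have "(\<lambda>x. indicator A x *\<^sub>R (h x * (indicator {0..1} x *\<^sub>R \<phi> x))) = (\<lambda>x. indicator A x *\<^sub>R (h x * \<phi> x))"
      using A by (auto simp: indicator_def fun_eq_iff)
    ultimately show "(\<lambda>x. indicator A x *\<^sub>R (h x * \<phi> x)) \<in> borel_measurable M" by simp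
    show "norm (indicator A x *\<^sub>R (h x * \<phi> x)) \<le> P'" for x
    proof (cases "x \<in> A")
      case True
      then have "norm (h x) * norm (\<phi> x) \<le> 1 * P'" using A P' hb by (intro mult_mono) auto
      then show ?thesis using True by (simp add: norm_mult)
    qed (use P' in simp)
  qed
  have Qb: "norm (LINT x|M. (if x \<in> S then h x else 0)) \<le> m" for S
    using norm_int_le_const[OF fin, of "\<lambda>x. if x \<in> S then h x else 0" 1] hb by (simp add: m_def)
  have "(LINT x|M. indicator {0..1} x *\<^sub>R (h x * \<phi> x))
     = (LINT x|M. indicator {0..\<delta>} x *\<^sub>R (h x * \<phi> x) + (indicator {\<delta><..1-\<delta>} x *\<^sub>R (h x * \<phi> x) + indicator {1-\<delta><..1} x *\<^sub>R (h x * \<phi> x)))"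
    by (intro Bochner_Integration.integral_cong refl) (use \<delta> in \<open>auto simp: indicator_def\<close>)
  also have "\<dots> = (LINT x|M. indicator {0..\<delta>} x *\<^sub>R (h x * \<phi> x)) + ((LINT x|M. indicator {\<delta><..1-\<delta>} x *\<^sub>R (h x * \<phi> x)) + (LINT x|M. indicator {1-\<delta><..1} x *\<^sub>R (h x * \<phi> x)))"
    using \<delta> by (subst Bochner_Integration.integral_add, (intro intA Bochner_Integration.integrable_add; auto)+)+ simp
  finally have split: "(LINT x|M. indicator {0..1} x *\<^sub>R (h x * \<phi> x)) = \<dots>" .
  define L where "L = (LINT s|lborel. indicator {0..\<delta>} s *\<^sub>R (\<phi>' s * cm_dist M h s))"
  define R where "R = (LINT s|lborel. indicator {1-\<delta>..1} s *\<^sub>R (\<phi>' s * (cm_dist M h 1 - cm_dist M h s)))"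
  have lp: "(LINT x|M. indicator {0..\<delta>} x *\<^sub>R (h x * \<phi> x)) = \<phi> \<delta> * cm_dist M h \<delta> - L"
    unfolding L_def by (rule left_piece[OF Ms fin hm hb d c]) (use \<delta> in auto)
  have rp: "(LINT x|M. indicator {1-\<delta><..1} x *\<^sub>R (h x * \<phi> x)) = \<phi> (1-\<delta>) * (cm_dist M h 1 - cm_dist M h (1-\<delta>)) + R"
    unfolding R_def by (rule right_piece[OF Ms fin hm hb d c]) (use \<delta> in auto)
  have Lb: "norm L \<le> K * \<eta> / a^2"
  proof -
    have "norm L \<le> (LINT s|lborel. indicator {0..\<delta>} s *\<^sub>R (K * \<eta> * (s * exp (- a * s))))"
      unfolding L_def
    proof (rule norm_int_le_int)
      show "integrable lborel (\<lambda>s. indicator {0..\<delta>} s *\<^sub>R (K * \<eta> * (s * exp (- a * s))))"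
        by (rule borel_integrable_compact) (auto intro!: continuous_intros)
      show "norm (indicator {0..\<delta>} s *\<^sub>R (\<phi>' s * cm_dist M h s)) \<le> indicator {0..\<delta>} s *\<^sub>R (K * \<eta> * (s * exp (- a * s)))" for s
      proof (cases "s \<in> {0..\<delta>}")
        case True
        have "norm (\<phi>' s) * norm (cm_dist M h s) \<le> (K * exp (- a * s)) * (\<eta> * s)"
          using True b1 Q0 K by (intro mult_mono) auto
        then show ?thesis using True by (simp add: norm_mult mult_ac)
      qed simp
    qed
    also have "\<dots> = (LINT s|lborel. (K * \<eta>) * (indicator {0..\<delta>} s *\<^sub>R (s * exp (- a * s))))"
      by (intro Bochner_Integration.integral_cong refl) (simp add: algebra_simps)
    also have "\<dots> = K * \<eta> * (LINT s|lborel. indicator {0..\<delta>} s *\<^sub>R (s * exp (- a * s)))"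
      by (rule integral_mult_right_zero)
    also have "\<dots> \<le> K * \<eta> * (1 / a^2)"
      using exp_int_left[OF a, of \<delta>] \<delta> K \<eta> by (intro mult_left_mono) auto
    finally show ?thesis by simp
  qed
  have Rb: "norm R \<le> K * \<eta> / a^2"
  proof -
    have "norm R \<le> (LINT s|lborel. indicator {1-\<delta>..1} s *\<^sub>R (K * \<eta> * ((1-s) * exp (- a * (1 - s)))))"
      unfolding R_def
    proof (rule norm_int_le_int)
      show "integrable lborel (\<lambda>s. indicator {1-\<delta>..1} s *\<^sub>R (K * \<eta> * ((1-s) * exp (- a * (1 - s)))))"
        by (rule borel_integrable_compact) (auto intro!: continuous_intros)
      show "norm (indicator {1-\<delta>..1} s *\<^sub>R (\<phi>' s * (cm_dist M h 1 - cm_dist M h s))) \<le> indicator {1-\<delta>..1} s *\<^sub>R (K * \<eta> * ((1-s) * exp (- a * (1 - s))))" for s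
      proof (cases "s \<in> {1-\<delta>..1}")
        case True
        have "norm (\<phi>' s) * norm (cm_dist M h 1 - cm_dist M h s) \<le> (K * exp (- a * (1 - s))) * (\<eta> * (1 - s))"
          using True b1' Q1 K by (intro mult_mono) auto
        then show ?thesis using True by (simp add: norm_mult mult_ac)
      qed simp
    qed
    also have "\<dots> = (LINT s|lborel. (K * \<eta>) * (indicator {1-\<delta>..1} s *\<^sub>R ((1-s) * exp (- a * (1 - s)))))"
      by (intro Bochner_Integration.integral_cong refl) (simp add: algebra_simps)
    also have "\<dots> = K * \<eta> * (LINT s|lborel. indicator {1-\<delta>..1} s *\<^sub>R ((1-s) * exp (- a * (1 - s))))"
      by (rule integral_mult_right_zero)
    also have "\<dots> \<le> K * \<eta> * (1 / a^2)"
      using exp_int_right[OF a, of \<delta>] \<delta> K \<eta> by (intro mult_left_mono) auto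
    finally show ?thesis by simp
  qed
  have pd: "norm (\<phi> \<delta>) \<le> P" "norm (\<phi> (1-\<delta>)) \<le> P" using b2 \<delta> by auto
  have q1: "norm (cm_dist M h \<delta>) \<le> m" using Qb[of "{0..\<delta>}"] unfolding cm_dist_def .
  have q2: "norm (cm_dist M h 1 - cm_dist M h (1-\<delta>)) \<le> m"
    using Qb[of "{1-\<delta><..1}"] Q_diff[OF Ms fin hm hb, of "1-\<delta>"] \<delta> by simp
  have B1: "norm (\<phi> \<delta> * cm_dist M h \<delta>) \<le> P * m"
    unfolding norm_mult using pd q1 P by (intro mult_mono) auto
  have B2: "norm (\<phi> (1-\<delta>) * (cm_dist M h 1 - cm_dist M h (1-\<delta>))) \<le> P * m"
    unfolding norm_mult using pd q2 P by (intro mult_mono) auto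
  have B3: "norm (LINT x|M. indicator {\<delta><..1-\<delta>} x *\<^sub>R (h x * \<phi> x)) \<le> m * P"
    unfolding m_def
  proof (rule norm_int_le_const[OF fin _ P])
    show "norm (indicator {\<delta><..1-\<delta>} x *\<^sub>R (h x * \<phi> x)) \<le> P" for x
    proof (cases "x \<in> {\<delta><..1-\<delta>}")
      case True
      then have "norm (h x) * norm (\<phi> x) \<le> 1 * P" using b2 P hb by (intro mult_mono) auto
      then show ?thesis using True by (simp add: norm_mult)
    qed (use P in simp)
  qed
  have tri: "norm ((A - L') + (Bm + (C + R'))) \<le> norm A + norm L' + norm Bm + norm C + norm R'" for A L' Bm C R' :: complex
    using norm_triangle_ineq[of "A-L'" "Bm+(C+R')"] norm_triangle_ineq4[of A L'] norm_triangle_ineq[of Bm "C+R'"]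
      norm_triangle_ineq[of C R'] by linarith
  show ?thesis
    unfolding split lp rp m_def[symmetric]
    by (rule order_trans[OF tri]) (use B1 B2 B3 Lb Rb mult.commute[of m P] in linarith)
qed



lemma rexp_bound:
  fixes a r :: real
  assumes a: "a > 0" and r: "r > 0"
  shows "r * exp (- (a * r)) \<le> 4 / (a^2 * r)"
proof -
  define y where "y = a * r"
  have y: "y > 0" using a r by (simp add: y_def)
  have e2: "exp (y/2) \<ge> y/2" using exp_ge_add_one_self[of "y/2"] by linarith
  have "exp y = exp (y/2) * exp (y/2)" by (simp flip: exp_add)
  also have "\<dots> \<ge> (y/2) * (y/2)" using e2 y by (intro mult_mono) auto
  finally have ey: "exp y \<ge> y^2/4" by (simp add: power2_eq_square)
  have "r * exp (- y) = r / exp y" by (simp add: exp_minus field_simps)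
  also have "\<dots> \<le> r / (y^2/4)" using ey y r by (intro divide_left_mono) auto
  also have "\<dots> = 4 / (a^2 * r)" using a r by (simp add: y_def field_simps power2_eq_square)
  finally show ?thesis by (simp add: y_def)
qed

lemma arc_eq: "closed_arc n = cis ` {0..2 * pi / real n}"
  unfolding closed_arc_def by auto

lemma arc_compact: "compact (closed_arc n)"
  unfolding arc_eq by (intro compact_continuous_image continuous_intros) auto

lemma arc_path_image:
  assumes "0 \<le> s" "s \<le> t" "t \<le> 2 * pi / real n"
  shows "path_image (part_circlepath 0 1 s t) \<subseteq> closed_arc n"
  using assms unfolding path_image_part_circlepath' arc_eq
  by (auto simp: closed_segment_eq_real_ivl)

lemma contour_bound:
  assumes "\<forall>z\<in>path_image (part_circlepath 0 1 s t). norm (f z) \<le> Bd" "0 \<le> Bd" "s \<le> t"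
  shows "norm (contour_integral (part_circlepath 0 1 s t) f) \<le> Bd * (t - s)"
proof (cases "f contour_integrable_on (part_circlepath 0 1 s t)")
  case True
  have "norm (contour_integral (part_circlepath 0 1 s t) f) \<le> Bd * 1 * (t - s)"
    by (rule has_contour_integral_bound_part_circlepath[OF has_contour_integral_integral[OF True]])
       (use assms in auto)
  then show ?thesis by simp
next
  case False
  then show ?thesis using assms by (simp add: not_integrable_contour_integral)
qed

theorem lemma2p2:
  fixes n :: nat
    and M :: "real measure" and h :: "real \<Rightarrow> complex"
    and \<Xi> :: "complex \<Rightarrow> complex"
    and \<Psi> :: "complex \<Rightarrow> real \<Rightarrow> complex"
    and c0 :: real
    and R :: "'a \<Rightarrow> complex \<Rightarrow> real"
    and F :: "'a filter"
  assumes n: "n \<ge> 3"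
    and M_sets: "sets M = sets borel"
    and M_fin: "finite_measure M"
    and M_supp: "emeasure M (UNIV - {0..1}) = 0"
    and h_meas: "h \<in> borel_measurable borel"
    and h_bnd: "\<forall>x. norm (h x) \<le> 1"
    and no_atom0: "cm_point M h 0 = 0"
    and no_atom1: "cm_point M h 1 = 0"
    and Q'0: "(cm_dist M h has_vector_derivative 0) (at 0 within {0..1})"
    and Q'1: "(cm_dist M h has_vector_derivative 0) (at 1 within {0..1})"
    and \<Xi>_bnd: "\<exists>B. \<forall>z. norm (\<Xi> z) \<le> B"
    and \<Psi>_C1: "C1_on_set (\<lambda>(w, x). \<Psi> w x) (closed_arc n \<times> {0..1})"
    and c0: "c0 > 0"
    and \<Psi>_re: "\<forall>w\<in>closed_arc n. \<forall>x\<in>{0..1}. Re (\<Psi> w x) \<le> - c0 * min x (1 - x)"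
    and R_pos: "\<forall>t. \<forall>w\<in>closed_arc n. R t w > 0"
    and R_inf: "\<forall>B. eventually (\<lambda>t. \<forall>w\<in>closed_arc n. R t w \<ge> B) F"
  shows "((\<lambda>t.
      contour_integral (part_circlepath 0 1 0 (pi / real n))
        (\<lambda>w. cm_integral M h (\<lambda>x. of_real (R t w) * exp (of_real (R t w) * \<Psi> w x) * \<Xi> (of_real (R t w) * w)))
    + contour_integral (part_circlepath 0 1 (pi / real n) (2 * pi / real n))
        (\<lambda>w. cm_integral M h (\<lambda>x. of_real (R t w) * exp (of_real (R t w) * \<Psi> w x) * \<Xi> (of_real (R t w) * w))))
    \<longlongrightarrow> 0) F"
proof -
  interpret finite_measure M by (rule M_fin)
  have Ms[measurable_cong]: "sets M = sets borel" by (rule M_sets)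
  have hm[measurable]: "h \<in> borel_measurable borel" by (rule h_meas)
  obtain B0 where B0: "\<forall>z. norm (\<Xi> z) \<le> B0" using \<Xi>_bnd by blast
  have B00: "0 \<le> B0" using B0[rule_format, of 0] by (meson norm_ge_zero order_trans)
  define Ks where "Ks = closed_arc n \<times> {0..1::real}"
  obtain U g D where U: "open U" "Ks \<subseteq> U" and gf: "\<forall>z\<in>Ks. g z = (\<lambda>(w, x). \<Psi> w x) z"
    and gd: "\<forall>z\<in>U. (g has_derivative blinfun_apply (D z)) (at z)" and Dc: "continuous_on U D"
    using \<Psi>_C1 unfolding C1_on_set_def Ks_def by blast
  have cK: "compact Ks" unfolding Ks_def by (intro compact_Times arc_compact compact_Icc)
  obtain C where C: "C \<ge> 0" "\<forall>z\<in>Ks. norm (D z) \<le> C"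
  proof -
    have "bounded (D ` Ks)"
      by (rule compact_imp_bounded[OF compact_continuous_image[OF continuous_on_subset[OF Dc U(2)] cK]])
    then obtain C0 where "\<forall>y\<in>D ` Ks. norm y \<le> C0" by (auto simp: bounded_iff)
    then show ?thesis by (intro that[of "max C0 0"]) force+
  qed
  define p' where "p' w x = blinfun_apply (D (w, x)) (0, 1)" for w x
  have pd: "((\<lambda>x. \<Psi> w x) has_vector_derivative p' w x) (at x within {0..1})"
    if w: "w \<in> closed_arc n" and x: "x \<in> {0..1}" for w x
  proof -
    have wx: "(w, x) \<in> U" using U(2) w x by (auto simp: Ks_def)
    have d1: "((\<lambda>x. (w, x)) has_derivative (\<lambda>t. (0, t))) (at x)"
      by (intro has_derivative_Pair has_derivative_const has_derivative_ident)
    have d2: "((g \<circ> (\<lambda>x. (w, x))) has_derivative (blinfun_apply (D (w, x)) \<circ> (\<lambda>t. (0, t)))) (at x)"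
      by (rule diff_chain_at[OF d1]) (use gd wx in auto)
    have eq: "(blinfun_apply (D (w, x)) \<circ> (\<lambda>t. (0, t))) = (\<lambda>t. t *\<^sub>R p' w x)"
    proof
      fix t :: real
      have "(0::complex, t) = t *\<^sub>R (0, 1)" by simp
      then show "(blinfun_apply (D (w, x)) \<circ> (\<lambda>t. (0, t))) t = t *\<^sub>R p' w x"
        unfolding p'_def o_def by (metis blinfun.scaleR_right)
    qed
    have "((\<lambda>x. g (w, x)) has_vector_derivative p' w x) (at x)"
      using d2 unfolding eq by (simp add: has_vector_derivative_def o_def)
    then have "((\<lambda>x. g (w, x)) has_vector_derivative p' w x) (at x within {0..1})"
      by (rule has_vector_derivative_at_within)
    then show ?thesis
      by (rule has_vector_derivative_transform_within[where d=1]) (use x w gf in \<open>auto simp: Ks_def\<close>)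
  qed
  have pc: "continuous_on {0..1} (p' w)" if w: "w \<in> closed_arc n" for w
  proof -
    have "continuous_on {0..1} (\<lambda>x. D (w, x))"
      by (rule continuous_on_compose2[OF Dc]) (use w U(2) in \<open>auto simp: Ks_def intro!: continuous_intros\<close>)
    then show ?thesis unfolding p'_def by (intro continuous_intros)
  qed
  have pb: "norm (p' w x) \<le> C" if w: "w \<in> closed_arc n" and x: "x \<in> {0..1}" for w x
  proof -
    have "norm (p' w x) \<le> norm (D (w, x)) * norm (0::complex, 1::real)"
      unfolding p'_def by (rule norm_blinfun)
    also have "norm (0::complex, 1::real) = 1" by (simp add: norm_Pair)
    moreover have "norm (D (w, x)) \<le> C" using C w x by (auto simp: Ks_def)
    ultimately show ?thesis by simp
  qed
  have Q00: "cm_dist M h 0 = 0"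
  proof -
    have "cm_dist M h 0 = cm_point M h 0"
      unfolding cm_dist_def cm_point_def by (intro Bochner_Integration.integral_cong refl) auto
    then show ?thesis using no_atom0 by simp
  qed
  define J where "J r w = (LINT x|M. indicator {0..1} x *\<^sub>R (h x * (of_real r * exp (of_real r * \<Psi> w x))))" for r w
  have est: "\<exists>B>0. \<forall>r\<ge>B. \<forall>w\<in>closed_arc n. norm (J r w) \<le> E" if E: "E > 0" for E
  proof -
    define \<eta> where "\<eta> = E * c0^2 / (4 * (C + 1))"
    have \<eta>0: "\<eta> > 0" unfolding \<eta>_def using E c0 C by simp
    obtain d0 where d0: "d0 > 0" "\<forall>y\<in>{0..1}. norm y < d0 \<longrightarrow> norm (cm_dist M h y) \<le> \<eta> * norm y"
    proof -
      have "\<exists>d>0. \<forall>y\<in>{0..1}. norm (y - 0) < d \<longrightarrow> norm (cm_dist M h y - cm_dist M h 0 - (y - 0) *\<^sub>R 0) \<le> \<eta> * norm (y - 0)"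
        using Q'0 \<eta>0 unfolding has_vector_derivative_def has_derivative_within_alt by blast
      then show ?thesis using that Q00 by auto
    qed
    obtain d1 where d1: "d1 > 0" "\<forall>y\<in>{0..1}. norm (y - 1) < d1 \<longrightarrow> norm (cm_dist M h y - cm_dist M h 1) \<le> \<eta> * norm (y - 1)"
    proof -
      have "\<exists>d>0. \<forall>y\<in>{0..1}. norm (y - 1) < d \<longrightarrow> norm (cm_dist M h y - cm_dist M h 1 - (y - 1) *\<^sub>R 0) \<le> \<eta> * norm (y - 1)"
        using Q'1 \<eta>0 unfolding has_vector_derivative_def has_derivative_within_alt by blast
      then show ?thesis using that by auto
    qed
    define \<delta> where "\<delta> = min (1/2) (min d0 d1 / 2)"
    have \<delta>: "0 < \<delta>" "\<delta> \<le> 1/2" "\<delta> < d0" "\<delta> < d1" using d0 d1 by (auto simp: \<delta>_def)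
    have Q0: "\<forall>s\<in>{0..\<delta>}. norm (cm_dist M h s) \<le> \<eta> * s"
    proof
      fix s assume s: "s \<in> {0..\<delta>}"
      then show "norm (cm_dist M h s) \<le> \<eta> * s" using d0(2)[rule_format, of s] \<delta> by auto
    qed
    have Q1: "\<forall>s\<in>{1-\<delta>..1}. norm (cm_dist M h 1 - cm_dist M h s) \<le> \<eta> * (1 - s)"
    proof
      fix s assume s: "s \<in> {1-\<delta>..1}"
      then have "norm (cm_dist M h s - cm_dist M h 1) \<le> \<eta> * norm (s - 1)" using d1(2)[rule_format, of s] \<delta> by auto
      then show "norm (cm_dist M h 1 - cm_dist M h s) \<le> \<eta> * (1 - s)" using s by (simp add: norm_minus_commute)
    qed
    define m where "m = measure M (space M)"
    have m0: "m \<ge> 0" by (simp add: m_def)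
    define B where "B = max 1 (24 * m / ((c0 * \<delta>)^2 * E) + 1)"
    have B1: "B \<ge> 1" by (simp add: B_def)
    have BB: "24 * m / ((c0 * \<delta>)^2 * E) \<le> B" by (simp add: B_def)
    show ?thesis
    proof (intro exI[of _ B] conjI allI impI ballI)
      show "0 < B" using B1 by simp
      fix r w assume r: "B \<le> r" and w: "w \<in> closed_arc n"
      have r0: "r > 0" using r B1 by simp
      define \<phi> where "\<phi> x = of_real r * exp (of_real r * \<Psi> w x)" for x
      define \<phi>' where "\<phi>' x = of_real r * ((of_real r * p' w x) * exp (of_real r * \<Psi> w x))" for x
      have d: "(\<phi> has_vector_derivative \<phi>' x) (at x within {0..1})" if x: "x \<in> {0..1}" for x
      proof -
        have "((\<lambda>x. of_real r * \<Psi> w x) has_vector_derivative of_real r * p' w x) (at x within {0..1})"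
          by (intro has_vector_derivative_mult_right pd w x)
        then have "((exp \<circ> (\<lambda>x. of_real r * \<Psi> w x)) has_vector_derivative (of_real r * p' w x) * exp (of_real r * \<Psi> w x)) (at x within {0..1})"
          by (rule field_vector_diff_chain_within) (auto intro: DERIV_subset DERIV_exp)
        then have "((\<lambda>x. exp (of_real r * \<Psi> w x)) has_vector_derivative (of_real r * p' w x) * exp (of_real r * \<Psi> w x)) (at x within {0..1})"
          by (simp add: o_def)
        then show ?thesis unfolding \<phi>_def \<phi>'_def by (rule has_vector_derivative_mult_right)
      qed
      have cpsi: "continuous_on {0..1} (\<lambda>x. \<Psi> w x)"
        by (rule continuous_on_vector_derivative) (use pd[OF w] in auto)
      have c: "continuous_on {0..1} \<phi>'"
        unfolding \<phi>'_def using pc[OF w] cpsi by (intro continuous_intros) auto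
      have reb: "Re (of_real r * \<Psi> w x) \<le> - (r * c0) * min x (1 - x)" if x: "x \<in> {0..1}" for x
        using \<Psi>_re w x r0 mult_left_mono[OF \<Psi>_re[rule_format, OF w x], of r] by (simp add: algebra_simps)
      have nphi': "norm (\<phi>' x) \<le> r^2 * C * exp (- (r * c0) * min x (1 - x))" if x: "x \<in> {0..1}" for x
      proof -
        have "norm (\<phi>' x) = r * r * norm (p' w x) * exp (Re (of_real r * \<Psi> w x))"
          using r0 by (simp add: \<phi>'_def norm_mult)
        also have "\<dots> \<le> r * r * C * exp (- (r * c0) * min x (1 - x))"
          using pb[OF w x] reb[OF x] r0 C by (intro mult_mono) auto
        finally show ?thesis by (simp add: power2_eq_square)
      qed
      have b1: "\<forall>x\<in>{0..\<delta>}. norm (\<phi>' x) \<le> (r^2 * C) * exp (- (r * c0) * x)"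
      proof
        fix x assume x: "x \<in> {0..\<delta>}"
        then have "min x (1 - x) = x" using \<delta> by auto
        then show "norm (\<phi>' x) \<le> (r^2 * C) * exp (- (r * c0) * x)" using nphi'[of x] x \<delta> by auto
      qed
      have b1': "\<forall>x\<in>{1-\<delta>..1}. norm (\<phi>' x) \<le> (r^2 * C) * exp (- (r * c0) * (1 - x))"
      proof
        fix x assume x: "x \<in> {1-\<delta>..1}"
        then have "min x (1 - x) = 1 - x" using \<delta> by auto
        then show "norm (\<phi>' x) \<le> (r^2 * C) * exp (- (r * c0) * (1 - x))" using nphi'[of x] x \<delta> by auto
      qed
      have b2: "\<forall>x\<in>{\<delta>..1-\<delta>}. norm (\<phi> x) \<le> r * exp (- (c0 * \<delta> * r))"
      proof
        fix x assume x: "x \<in> {\<delta>..1-\<delta>}"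
        then have x01: "x \<in> {0..1}" using \<delta> by auto
        have mn: "min x (1 - x) \<ge> \<delta>" using x by auto
        have "Re (of_real r * \<Psi> w x) \<le> - (r * c0) * min x (1 - x)" by (rule reb[OF x01])
        also have "\<dots> \<le> - (c0 * \<delta> * r)" using mn r0 c0 mult_left_mono[OF mn, of "r * c0"] by (simp add: algebra_simps)
        finally have "exp (Re (of_real r * \<Psi> w x)) \<le> exp (- (c0 * \<delta> * r))" by simp
        then show "norm (\<phi> x) \<le> r * exp (- (c0 * \<delta> * r))" using r0 by (simp add: \<phi>_def norm_mult)
      qed
      have kb: "norm (LINT x|M. indicator {0..1} x *\<^sub>R (h x * \<phi> x)) \<le> 3 * (measure M (space M) * (r * exp (- (c0 * \<delta> * r)))) + 2 * ((r^2 * C) * \<eta> / (r * c0)^2)"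
        by (rule key[OF Ms M_fin hm h_bnd d c \<delta>(1,2) less_imp_le[OF \<eta>0] _ _ _ Q0 Q1 b1 b1' b2])
           (use r0 c0 C in auto)
      have t1: "(r^2 * C) * \<eta> / (r * c0)^2 \<le> E / 4"
      proof -
        have "(r^2 * C) * \<eta> / (r * c0)^2 = C * \<eta> / c0^2" using r0 c0 by (simp add: field_simps power2_eq_square)
        also have "\<dots> = E * (C / (C + 1)) / 4"
        proof -
          have c2: "c0^2 \<noteq> 0" using c0 by auto
          have "\<eta> / c0^2 = E / (4 * (C + 1))" unfolding \<eta>_def using c2 by simp
          then have "C * \<eta> / c0^2 = C * (E / (4 * (C + 1)))" by (metis times_divide_eq_right)
          then show ?thesis by (simp add: mult.commute add.commute)
        qed
        also have "\<dots> \<le> E * 1 / 4" using E C by (intro divide_right_mono mult_left_mono) auto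
        finally show ?thesis by simp
      qed
      have t2: "m * (r * exp (- (c0 * \<delta> * r))) \<le> E / 6"
      proof -
        have "r * exp (- (c0 * \<delta> * r)) \<le> 4 / ((c0 * \<delta>)^2 * r)" by (rule rexp_bound) (use c0 \<delta> r0 in auto)
        then have "m * (r * exp (- (c0 * \<delta> * r))) \<le> m * (4 / ((c0 * \<delta>)^2 * r))" using m0 by (rule mult_left_mono)
        also have "\<dots> \<le> E / 6"
        proof -
          have pos: "(c0 * \<delta>)^2 * E > 0" using c0 \<delta> E by simp
          have "24 * m / ((c0 * \<delta>)^2 * E) \<le> r" using BB r by linarith
          then have "24 * m \<le> r * ((c0 * \<delta>)^2 * E)" using pos by (simp add: divide_le_eq)
          then show ?thesis using r0 c0 \<delta> by (simp add: field_simps)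
        qed
        finally show ?thesis .
      qed
      have "norm (J r w) = norm (LINT x|M. indicator {0..1} x *\<^sub>R (h x * \<phi> x))"
        by (simp add: J_def \<phi>_def)
      also have "\<dots> \<le> E" using kb t1 t2 unfolding m_def by linarith
      finally show "norm (J r w) \<le> E" .
    qed
  qed
  have AE01: "AE x in M. x \<in> {0..1}"
  proof (rule AE_I')
    show "UNIV - {0..1} \<in> null_sets M" using M_supp by (intro null_setsI) auto
  qed auto
  have cm: "norm (cm_integral M h (\<lambda>x. of_real r * exp (of_real r * \<Psi> w x) * \<Xi> (of_real r * w))) \<le> B0 * norm (J r w)" for r w
  proof -
    define f where "f x = of_real r * exp (of_real r * \<Psi> w x) * \<Xi> (of_real r * w)" for x
    have eqf: "(\<lambda>x. of_real r * exp (of_real r * \<Psi> w x) * \<Xi> (of_real r * w)) = f" by (simp add: f_def fun_eq_iff)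
    have main: "norm (LINT x|M. f x * h x) \<le> B0 * norm (J r w)"
    proof (cases "integrable M (\<lambda>x. f x * h x)")
      case True
      have fm[measurable]: "(\<lambda>x. f x * h x) \<in> borel_measurable M" using True by (rule borel_measurable_integrable)
      have "(LINT x|M. f x * h x) = (LINT x|M. indicator {0..1} x *\<^sub>R (f x * h x))"
      proof (rule integral_cong_AE)
        show "(\<lambda>x. indicator {0..1} x *\<^sub>R (f x * h x)) \<in> borel_measurable M" by measurable
        show "AE x in M. f x * h x = indicator {0..1} x *\<^sub>R (f x * h x)"
          using AE01 by eventually_elim auto
      qed (rule fm)
      also have "\<dots> = (LINT x|M. \<Xi> (of_real r * w) * (indicator {0..1} x *\<^sub>R (h x * (of_real r * exp (of_real r * \<Psi> w x)))))"
        by (intro Bochner_Integration.integral_cong refl) (simp add: f_def mult_ac)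
      also have "\<dots> = \<Xi> (of_real r * w) * J r w" unfolding J_def by (rule integral_mult_right_zero)
      finally have "norm (LINT x|M. f x * h x) = norm (\<Xi> (of_real r * w)) * norm (J r w)" by (simp add: norm_mult)
      also have "\<dots> \<le> B0 * norm (J r w)" using B0 by (intro mult_right_mono) auto
      finally show ?thesis .
    next
      case False
      then show ?thesis using B00 by (simp add: not_integrable_integral_eq)
    qed
    show ?thesis unfolding eqf cm_integral_def by (rule main)
  qed
  show ?thesis
  proof (rule tendstoI)
    fix e :: real assume e: "0 < e"
    define E where "E = e / (2 * (B0 + 1) * (pi + 1))"
    have pi1: "0 < pi + 1" using pi_gt_zero by linarith
    have E0: "E > 0" unfolding E_def by (intro divide_pos_pos mult_pos_pos) (use e B00 pi1 in auto)
    obtain B where B: "B > 0" "\<forall>r\<ge>B. \<forall>w\<in>closed_arc n. norm (J r w) \<le> E" using est[OF E0] by blast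
    have n0: "real n \<ge> 3" using n by simp
    have key1: "B0 * E * (2 * pi / real n) < e"
    proof -
      have "2 * pi / real n \<le> pi" using n0 pi_gt_zero by (simp add: field_simps)
      then have "B0 * E * (2 * pi / real n) \<le> B0 * E * pi"
        using B00 E0 by (intro mult_left_mono) auto
      also have "\<dots> < e"
      proof -
        have bp: "0 \<le> B0 * pi" using B00 pi_gt_zero by simp
        have D: "B0 * pi < 2 * (B0 + 1) * (pi + 1)"
        proof -
          have "2 * (B0 + 1) * (pi + 1) = 2 * (B0 * pi) + 2 * B0 + 2 * pi + 2" by (simp add: algebra_simps)
          then show ?thesis using bp B00 pi_gt_zero by linarith
        qed
        have "B0 * E * pi = e * (B0 * pi) / (2 * (B0 + 1) * (pi + 1))" by (simp add: E_def)
        also have "\<dots> < e * (2 * (B0 + 1) * (pi + 1)) / (2 * (B0 + 1) * (pi + 1))"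
          using D e B00 pi1 by (intro divide_strict_right_mono mult_strict_left_mono) (auto intro!: mult_pos_pos)
        also have "\<dots> = e" using B00 pi1 by simp
        finally show ?thesis .
      qed
      finally show ?thesis .
    qed
    show "eventually (\<lambda>t. dist (contour_integral (part_circlepath 0 1 0 (pi / real n))
        (\<lambda>w. cm_integral M h (\<lambda>x. of_real (R t w) * exp (of_real (R t w) * \<Psi> w x) * \<Xi> (of_real (R t w) * w)))
    + contour_integral (part_circlepath 0 1 (pi / real n) (2 * pi / real n))
        (\<lambda>w. cm_integral M h (\<lambda>x. of_real (R t w) * exp (of_real (R t w) * \<Psi> w x) * \<Xi> (of_real (R t w) * w)))) 0 < e) F"
      using R_inf[rule_format, of B]
    proof (rule eventually_mono)
      fix t assume H: "\<forall>w\<in>closed_arc n. B \<le> R t w"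
      define G where "G = (\<lambda>w. cm_integral M h (\<lambda>x. of_real (R t w) * exp (of_real (R t w) * \<Psi> w x) * \<Xi> (of_real (R t w) * w)))"
      have Gb: "\<forall>w\<in>closed_arc n. norm (G w) \<le> B0 * E"
      proof
        fix w assume w: "w \<in> closed_arc n"
        have "norm (G w) \<le> B0 * norm (J (R t w) w)" unfolding G_def by (rule cm)
        also have "\<dots> \<le> B0 * E" using B H w B00 by (intro mult_left_mono) auto
        finally show "norm (G w) \<le> B0 * E" .
      qed
      have pn: "0 \<le> pi / real n" "pi / real n \<le> 2 * pi / real n" using n0 pi_gt_zero by (auto simp: field_simps)
      have c1: "norm (contour_integral (part_circlepath 0 1 0 (pi / real n)) G) \<le> B0 * E * (pi / real n - 0)"
        by (rule contour_bound) (use Gb arc_path_image[of 0 "pi / real n" n] pn B00 E0 in auto)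
      have c2: "norm (contour_integral (part_circlepath 0 1 (pi / real n) (2 * pi / real n)) G) \<le> B0 * E * (2 * pi / real n - pi / real n)"
        by (rule contour_bound) (use Gb arc_path_image[of "pi / real n" "2 * pi / real n" n] pn B00 E0 in auto)
      have "dist (contour_integral (part_circlepath 0 1 0 (pi / real n)) G + contour_integral (part_circlepath 0 1 (pi / real n) (2 * pi / real n)) G) 0
          \<le> norm (contour_integral (part_circlepath 0 1 0 (pi / real n)) G) + norm (contour_integral (part_circlepath 0 1 (pi / real n) (2 * pi / real n)) G)"
        by (simp add: norm_triangle_ineq)
      also have "\<dots> \<le> B0 * E * (2 * pi / real n)"
      proof -
        have "B0 * E * (pi / real n - 0) + B0 * E * (2 * pi / real n - pi / real n) = B0 * E * (2 * pi / real n)"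
          using n0 by (simp add: field_simps)
        then show ?thesis using c1 c2 by linarith
      qed
      also have "\<dots> < e" by (rule key1)
      finally show "dist (contour_integral (part_circlepath 0 1 0 (pi / real n)) G + contour_integral (part_circlepath 0 1 (pi / real n) (2 * pi / real n)) G) 0 < e" .
    qed
  qed
qed

end
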